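(* Let $\Omega$ be a transitive state space. There exists a basis $\{v_l\}_{l=1}^{N+1}$ of $V$, orthonormal with respect to $\langle\cdot,\cdot\rangle_{GL(\Omega)}$, such that $v_{N+1}=\omega_M$ and, for $x\in V$, $$x\in\mathrm{aff}(\Omega)\iff x=\sum_{l=1}^Na_lv_l+\omega_M\ \text{ for some }a_1,\dots,a_N\in\mathbb R.$$
   Context: $V=\mathbb R^{N+1}$ with Euclidean inner product $(\cdot,\cdot)_E$. A state space $\Omega\subset V$ is a compact convex set with $\mathrm{span}(\Omega)=V$ and $0\notin\mathrm{aff}(\Omega)$ (so $\dim\mathrm{aff}(\Omega)=N$). $GL(\Omega)$ is the compact group of linear bijections $T:V\to V$ with $T(\Omega)=\Omega$, $\mu$ its normalized two-sided Haar measure, and $\langle x,y\rangle_{GL(\Omega)}=\int_{GL(\Omega)}(Tx,Ty)_E\,d\mu(T)$. $\Omega$ is transitive if $GL(\Omega)$ acts transitively on its extreme points; then there is a unique state $\omega_M$ (maximally mixed state) with $T\omega_M=\omega_M$ for all $T\in GL(\Omega)$, and by the standing convention for transitive state spaces $\Omega$ is rescaled so that $(\omega_M,\omega_M)_E=1$. *)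

theory Defs
  imports "HOL-Probability.Probability"
begin

definition state_space :: "(real^'n) set \<Rightarrow> bool" where
  "state_space \<Omega> \<longleftrightarrow> compact \<Omega> \<and> convex \<Omega> \<and> span \<Omega> = UNIV \<and> 0 \<notin> affine hull \<Omega>"

definition GL_of :: "(real^'n) set \<Rightarrow> (real^'n^'n) set" where
  "GL_of \<Omega> = {T. invertible T \<and> (\<lambda>x. T *v x) ` \<Omega> = \<Omega>}"

definition haar_GL :: "(real^'n) set \<Rightarrow> (real^'n^'n) measure \<Rightarrow> bool" where
  "haar_GL \<Omega> \<mu> \<longleftrightarrow> prob_space \<mu> \<and> sets \<mu> = sets borel \<and> measure \<mu> (GL_of \<Omega>) = 1 \<and>
     (\<forall>T\<in>GL_of \<Omega>. distr \<mu> borel (\<lambda>A. T ** A) = \<mu> \<and> distr \<mu> borel (\<lambda>A. A ** T) = \<mu>)"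

definition GL_inner :: "(real^'n^'n) measure \<Rightarrow> real^'n \<Rightarrow> real^'n \<Rightarrow> real" where
  "GL_inner \<mu> x y = (\<integral>T. (T *v x) \<bullet> (T *v y) \<partial>\<mu>)"

definition transitive_state_space :: "(real^'n) set \<Rightarrow> bool" where
  "transitive_state_space \<Omega> \<longleftrightarrow> state_space \<Omega> \<and>
     (\<forall>x y. x extreme_point_of \<Omega> \<longrightarrow> y extreme_point_of \<Omega> \<longrightarrow>
        (\<exists>T\<in>GL_of \<Omega>. T *v x = y))"

definition omegaM :: "(real^'n) set \<Rightarrow> real^'n" where
  "omegaM \<Omega> = (THE w. w \<in> \<Omega> \<and> (\<forall>T\<in>GL_of \<Omega>. T *v w = w))"

end

theory Submission imports Defs begin

fun gs :: "('a::real_vector \<Rightarrow> 'a \<Rightarrow> real) \<Rightarrow> 'a list \<Rightarrow> 'a list" where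
  "gs B [] = []"
| "gs B (x # xs) = (let ys = gs B xs; y = x - (\<Sum>i<length ys. B (ys!i) x *\<^sub>R ys!i)
     in (y /\<^sub>R sqrt (B y y)) # ys)"

lemma gs_length[simp]: "length (gs B xs) = length xs"
  by (induction xs) (auto simp: Let_def)

lemma gs_drop: "drop k (gs B xs) = gs B (drop k xs)"
proof (induction xs arbitrary: k)
  case Nil then show ?case by simp
next
  case (Cons x xs) then show ?case by (cases k) (auto simp: Let_def)
qed

lemma gs_span: "set (gs B xs) \<subseteq> span (set xs)"
proof (induction xs)
  case Nil then show ?case by simp
next
  case (Cons x xs)
  let ?ys = "gs B xs"
  have ys: "set ?ys \<subseteq> span (set (x#xs))" using Cons span_mono[of "set xs" "set (x#xs)"] by auto
  have "(\<Sum>i<length ?ys. B (?ys!i) x *\<^sub>R ?ys!i) \<in> span (set (x#xs))"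
    by (intro span_sum span_scale) (use ys nth_mem in blast)
  then have "x - (\<Sum>i<length ?ys. B (?ys!i) x *\<^sub>R ?ys!i) \<in> span (set (x#xs))"
    by (intro span_diff) (auto intro: span_base)
  then show ?case using ys by (auto simp: Let_def intro: span_scale)
qed

definition orthonormal_list where
  "orthonormal_list B ys \<longleftrightarrow> (\<forall>i<length ys. \<forall>j<length ys. B (ys!i) (ys!j) = (if i = j then 1 else 0))"

lemma gs_orthonormal:
  assumes sym: "\<And>x y. B x y = B y x" and lin: "\<And>x. linear (B x)"
    and pos: "\<And>x. x \<noteq> 0 \<Longrightarrow> B x x > 0"
  shows "independent (set xs) \<Longrightarrow> distinct xs \<Longrightarrow> orthonormal_list B (gs B xs)"
proof (induction xs)
  case Nil then show ?case by (simp add: orthonormal_list_def)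
next
  case (Cons x xs)
  let ?ys = "gs B xs"
  define y where "y = x - (\<Sum>i<length ?ys. B (?ys!i) x *\<^sub>R ?ys!i)"
  define z where "z = y /\<^sub>R sqrt (B y y)"
  have ind: "independent (set xs)" using Cons.prems
    by (meson dependent_mono list.set_intros(2) subsetI)
  have on: "orthonormal_list B ?ys" using Cons ind by auto
  have xn: "x \<notin> span (set xs)" using Cons.prems by (simp add: independent_insert)
  have "y \<noteq> 0"
  proof
    assume "y = 0"
    then have "x = (\<Sum>i<length ?ys. B (?ys!i) x *\<^sub>R ?ys!i)" by (simp add: y_def)
    also have "\<dots> \<in> span (set xs)"
      by (intro span_sum span_scale) (use gs_span[of B xs] nth_mem in blast)
    finally show False using xn by simp
  qed
  then have yy: "B y y > 0" using pos by simp
  have by0: "B (?ys!j) y = 0" if j: "j < length ?ys" for j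
  proof -
    have "B (?ys!j) y = B (?ys!j) x - (\<Sum>i<length ?ys. B (?ys!i) x * B (?ys!j) (?ys!i))"
      by (simp add: y_def linear_diff[OF lin] linear_sum[OF lin] linear_scale[OF lin])
    also have "(\<Sum>i<length ?ys. B (?ys!i) x * B (?ys!j) (?ys!i)) = (\<Sum>i<length ?ys. if i = j then B (?ys!i) x else 0)"
      by (rule sum.cong) (use on j in \<open>auto simp: orthonormal_list_def\<close>)
    also have "\<dots> = B (?ys!j) x" using j by simp
    finally show ?thesis by simp
  qed
  have bz0: "B (?ys!j) z = 0" if j: "j < length ?ys" for j
    using by0[OF j] by (simp add: z_def linear_scale[OF lin])
  have bzz: "B z z = 1"
  proof -
    have "B z z = inverse (sqrt (B y y)) * (inverse (sqrt (B y y)) * B y y)"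
      by (simp add: z_def linear_scale[OF lin] sym[of "_ /\<^sub>R _"])
    also have "\<dots> = B y y / (sqrt (B y y) * sqrt (B y y))" by (simp add: field_simps)
    also have "\<dots> = 1" using yy by simp
    finally show ?thesis .
  qed
  have eq: "gs B (x#xs) = z # ?ys" by (simp add: Let_def y_def z_def)
  show ?case unfolding eq orthonormal_list_def
  proof (intro allI impI)
    fix i j assume i: "i < length (z # ?ys)" and j: "j < length (z # ?ys)"
    show "B ((z # ?ys) ! i) ((z # ?ys) ! j) = (if i = j then 1 else 0)"
    proof (cases i)
      case 0 then show ?thesis
        using bzz bz0 j sym by (cases j) auto
    next
      case (Suc i') then show ?thesis
        using bz0 j i on sym by (cases j) (auto simp: orthonormal_list_def)
    qed
  qed
qed

lemma orthonormal_basis_B: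
  fixes B :: "real^'n \<Rightarrow> real^'n \<Rightarrow> real" and m :: "real^'n"
  assumes sym: "\<And>x y. B x y = B y x" and lin: "\<And>x. linear (B x)"
    and pos: "\<And>x. x \<noteq> 0 \<Longrightarrow> B x x > 0" and mm: "B m m = 1"
  shows "\<exists>v :: nat \<Rightarrow> real^'n.
           inj_on v {1..CARD('n)} \<and>
           independent (v ` {1..CARD('n)}) \<and> span (v ` {1..CARD('n)}) = UNIV \<and>
           (\<forall>i\<in>{1..CARD('n)}. \<forall>j\<in>{1..CARD('n)}.
              B (v i) (v j) = (if i = j then 1 else 0)) \<and>
           v (CARD('n)) = m \<and>
           (\<forall>x. B m x = 1 \<longleftrightarrow>
              (\<exists>a :: nat \<Rightarrow> real. x = (\<Sum>l = 1..CARD('n) - 1. a l *\<^sub>R v l) + m))"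
proof -
  have m0: "m \<noteq> 0" by (metis lin linear_0 mm zero_neq_one)
  define E where "E = extend_basis {m}"
  have mE: "m \<in> E" and indE: "independent E" and spE: "span E = UNIV"
    using extend_basis_superset[of "{m}"] independent_extend_basis[of "{m}"] m0
    by (auto simp: E_def)
  have finE: "finite E" using independent_bound[OF indE] by auto
  have cardE: "card E = CARD('n)"
    using dim_eq_card[of E UNIV] spE indE by simp
  obtain xs where xs: "set xs = E - {m}" "distinct xs"
    using finite_distinct_list[of "E - {m}"] finE by auto
  define L where "L = gs B (xs @ [m])"
  have setx: "set (xs @ [m]) = E" using xs mE by auto
  have dx: "distinct (xs @ [m])" using xs by auto
  have lenL: "length L = CARD('n)"
    using distinct_card[OF dx] setx cardE by (simp add: L_def)
  have onL: "orthonormal_list B L"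
    unfolding L_def by (rule gs_orthonormal[OF sym lin pos]) (use setx indE dx in auto)
  have "drop (length xs) L = [m]"
    using mm by (simp add: L_def gs_drop Let_def)
  moreover have "L ! length xs = drop (length xs) L ! 0"
    using lenL by (simp add: L_def)
  ultimately have Lm: "L ! length xs = m" by simp
  define N where "N = CARD('n) - 1"
  have CN: "CARD('n) = Suc N" using N_def by simp
  have lenxs: "length xs = N" using lenL CN by (simp add: L_def)
  define v where "v l = L ! (l - 1)" for l
  define I where "I = {1..CARD('n)}"
  have orth: "B (v i) (v j) = (if i = j then 1 else 0)" if "i \<in> I" "j \<in> I" for i j
  proof -
    have "i - 1 < length L" "j - 1 < length L" "i - 1 = j - 1 \<longleftrightarrow> i = j"
      using that lenL by (auto simp: I_def)
    then show ?thesis using onL by (auto simp: orthonormal_list_def v_def)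
  qed
  have injv: "inj_on v I"
  proof (rule inj_onI)
    fix i j assume "i \<in> I" "j \<in> I" "v i = v j"
    then show "i = j" using orth[of i j] orth[of j j] by (auto split: if_splits)
  qed
  have vN: "v (CARD('n)) = m" using Lm lenxs CN by (simp add: v_def)
  have finI: "finite I" by (simp add: I_def)
  have indv: "independent (v ` I)"
  proof
    assume "dependent (v ` I)"
    then obtain u where u: "\<exists>w\<in>v ` I. u w \<noteq> 0" "(\<Sum>w\<in>v ` I. u w *\<^sub>R w) = 0"
      using dependent_finite[of "v ` I"] finI by auto
    then obtain k where k: "k \<in> I" "u (v k) \<noteq> 0" by auto
    have "0 = B (v k) (\<Sum>w\<in>v ` I. u w *\<^sub>R w)" using u(2) linear_0[OF lin] by simp
    also have "\<dots> = (\<Sum>l\<in>I. u (v l) * B (v k) (v l))"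
      by (simp add: linear_sum[OF lin] linear_scale[OF lin] sum.reindex[OF injv])
    also have "\<dots> = (\<Sum>l\<in>I. if l = k then u (v k) else 0)"
      by (rule sum.cong) (use orth k in auto)
    also have "\<dots> = u (v k)" using k finI by simp
    finally show False using k by simp
  qed
  have cardv: "card (v ` I) = CARD('n)" using card_image[OF injv] by (simp add: I_def)
  have spv: "span (v ` I) = UNIV"
    using card_ge_dim_independent[of "v ` I" UNIV] indv cardv by auto
  have char: "B m x = 1 \<longleftrightarrow> (\<exists>a :: nat \<Rightarrow> real. x = (\<Sum>l = 1..N. a l *\<^sub>R v l) + m)" for x
  proof
    assume h: "B m x = 1"
    have "x \<in> span (v ` I)" using spv by simp
    then obtain u where "x = (\<Sum>w\<in>v ` I. u w *\<^sub>R w)"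
      using span_finite[of "v ` I"] finI by auto
    then have x: "x = (\<Sum>l\<in>I. u (v l) *\<^sub>R v l)" by (simp add: sum.reindex[OF injv])
    have I: "I = insert (Suc N) {1..N}" using CN by (auto simp: I_def)
    have x2: "x = (\<Sum>l=1..N. u (v l) *\<^sub>R v l) + u m *\<^sub>R m"
      using x I vN CN by (simp add: add.commute)
    have "B m x = (\<Sum>l\<in>I. u (v l) * B (v (Suc N)) (v l))"
      using x vN CN by (simp add: linear_sum[OF lin] linear_scale[OF lin])
    also have "\<dots> = (\<Sum>l\<in>I. if l = Suc N then u (v (Suc N)) else 0)"
      by (rule sum.cong) (use orth CN in \<open>auto simp: I_def\<close>)
    also have "\<dots> = u m" using finI CN vN by (simp add: I_def)
    finally have "u m = 1" using h by simp
    then show "\<exists>a. x = (\<Sum>l = 1..N. a l *\<^sub>R v l) + m" using x2 by auto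
  next
    assume "\<exists>a. x = (\<Sum>l = 1..N. a l *\<^sub>R v l) + m"
    then obtain a where x: "x = (\<Sum>l = 1..N. a l *\<^sub>R v l) + m" by auto
    have "B m x = (\<Sum>l = 1..N. a l * B (v (Suc N)) (v l)) + B m m"
      using x vN CN by (simp add: linear_sum[OF lin] linear_scale[OF lin] linear_add[OF lin])
    also have "(\<Sum>l = 1..N. a l * B (v (Suc N)) (v l)) = 0"
      by (rule sum.neutral) (use orth CN in \<open>auto simp: I_def\<close>)
    finally show "B m x = 1" using mm by simp
  qed
  show ?thesis
    by (rule exI[of _ v]) (use injv indv spv orth vN char in \<open>auto simp: I_def N_def\<close>)
qed


lemma lin_mv: "linear (\<lambda>A::real^'n^'m. A *v x)"
  by (rule linearI) (simp_all add: algebra_simps vec_eq_iff matrix_vector_mult_def sum_distrib_left sum.distrib)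

lemma lin_mm: "linear (\<lambda>A::real^'n^'n. A ** S)"
  by (rule linearI) (simp_all add: vec_eq_iff matrix_matrix_mult_def sum.distrib sum_distrib_left algebra_simps)

lemma lin_mm2: "linear (\<lambda>A::real^'n^'n. S ** A)"
  by (rule linearI) (simp_all add: vec_eq_iff matrix_matrix_mult_def sum.distrib sum_distrib_left algebra_simps)

lemma bm_lin: "linear f \<Longrightarrow> (f :: 'a::euclidean_space \<Rightarrow> 'b::euclidean_space) \<in> borel_measurable borel"
  by (intro borel_measurable_continuous_onI linear_continuous_on linear_conv_bounded_linear[THEN iffD1])

theorem proposition2p12:
  fixes \<Omega> :: "(real^'n) set" and \<mu> :: "(real^'n^'n) measure"
  assumes "transitive_state_space \<Omega>"
    and "haar_GL \<Omega> \<mu>"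
    and "omegaM \<Omega> \<bullet> omegaM \<Omega> = 1"
  shows "\<exists>v :: nat \<Rightarrow> real^'n.
           inj_on v {1..CARD('n)} \<and>
           independent (v ` {1..CARD('n)}) \<and> span (v ` {1..CARD('n)}) = UNIV \<and>
           (\<forall>i\<in>{1..CARD('n)}. \<forall>j\<in>{1..CARD('n)}.
              GL_inner \<mu> (v i) (v j) = (if i = j then 1 else 0)) \<and>
           v (CARD('n)) = omegaM \<Omega> \<and>
           (\<forall>x. x \<in> affine hull \<Omega> \<longleftrightarrow>
              (\<exists>a :: nat \<Rightarrow> real. x = (\<Sum>l = 1..CARD('n) - 1. a l *\<^sub>R v l) + omegaM \<Omega>))"
proof -
  let ?G = "GL_of \<Omega>"
  have ps: "prob_space \<mu>" and sets_eq: "sets \<mu> = sets borel" and G1: "measure \<mu> ?G = 1"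
    and linv: "\<And>S. S \<in> ?G \<Longrightarrow> distr \<mu> borel (\<lambda>A. S ** A) = \<mu>"
    and rinv: "\<And>S. S \<in> ?G \<Longrightarrow> distr \<mu> borel (\<lambda>A. A ** S) = \<mu>"
    using assms(2) unfolding haar_GL_def by auto
  interpret prob_space \<mu> by (fact ps)
  have AEG: "AE T in \<mu>. T \<in> ?G" using AE_prob_1[OF G1] .
  have AEGI: "AE T in \<mu>. Q T" if "\<And>T. T \<in> ?G \<Longrightarrow> Q T" for Q
    using AEG by (rule AE_mp) (use that in \<open>auto intro!: AE_I2\<close>)
  have meas: "f \<in> borel_measurable \<mu>" if "f \<in> borel_measurable borel" for f :: "real^'n^'n \<Rightarrow> 'b::topological_space"
    using that measurable_cong_sets[OF sets_eq refl] by blast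
  have measM: "f \<in> measurable \<mu> borel" if "f \<in> borel_measurable borel" for f :: "real^'n^'n \<Rightarrow> real^'n^'n"
    using that measurable_cong_sets[OF sets_eq refl] by blast
  have mvb: "(\<lambda>T::real^'n^'n. T *v x) \<in> borel_measurable borel" for x
    by (rule bm_lin[OF lin_mv])
  have mv_meas: "(\<lambda>T::real^'n^'n. T *v x) \<in> borel_measurable \<mu>" for x
    by (rule meas[OF mvb])
  have in_meas: "(\<lambda>T::real^'n^'n. (T *v x) \<bullet> (T *v y)) \<in> borel_measurable \<mu>" for x y
    using mv_meas by (intro borel_measurable_inner) auto
  from assms(1) have ss: "state_space \<Omega>"
    and trans: "\<And>x y. x extreme_point_of \<Omega> \<Longrightarrow> y extreme_point_of \<Omega> \<Longrightarrow> \<exists>T\<in>?G. T *v x = y"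
    unfolding transitive_state_space_def by auto
  have cpt: "compact \<Omega>" and cvx: "convex \<Omega>" and spO: "span \<Omega> = UNIV"
    using ss unfolding state_space_def by auto
  obtain R where R: "\<And>y. y \<in> \<Omega> \<Longrightarrow> norm y \<le> R"
    using compact_imp_bounded[OF cpt] unfolding bounded_iff by blast
  have GO: "T *v y \<in> \<Omega>" if "T \<in> ?G" "y \<in> \<Omega>" for T y
    using that unfolding GL_of_def by blast
  have linT: "linear ((*v) T)" for T :: "real^'n^'n" by simp
  have bnd: "\<exists>K. \<forall>T\<in>?G. norm (T *v x) \<le> K" for x
  proof -
    have "x \<in> span \<Omega>" using spO by simp
    then obtain S u where S: "finite S" "S \<subseteq> \<Omega>" "x = (\<Sum>v\<in>S. u v *\<^sub>R v)"
      unfolding span_explicit by auto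
    show ?thesis
    proof (intro exI ballI)
      fix T assume T: "T \<in> ?G"
      have "T *v x = (\<Sum>v\<in>S. u v *\<^sub>R (T *v v))"
        using S(3) by (simp add: linear_sum[OF linT] linear_scale[OF linT])
      also have "norm \<dots> \<le> (\<Sum>v\<in>S. norm (u v *\<^sub>R (T *v v)))" by (rule norm_sum)
      also have "\<dots> \<le> (\<Sum>v\<in>S. \<bar>u v\<bar> * R)"
        by (intro sum_mono) (use S(2) R GO[OF T] in \<open>auto intro!: mult_left_mono\<close>)
      finally show "norm (T *v x) \<le> (\<Sum>v\<in>S. \<bar>u v\<bar> * R)" .
    qed
  qed
  have int_mv: "integrable \<mu> (\<lambda>T. T *v x)" for x
  proof -
    obtain K where K: "\<forall>T\<in>?G. norm (T *v x) \<le> K" using bnd by blast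
    have "AE T in \<mu>. norm (T *v x) \<le> K" by (rule AEGI) (use K in auto)
    then show ?thesis by (rule integrable_const_bound) (rule mv_meas)
  qed
  have int_in: "integrable \<mu> (\<lambda>T. (T *v x) \<bullet> (T *v y))" for x y
  proof -
    obtain K where K: "\<forall>T\<in>?G. norm (T *v x) \<le> K" using bnd by blast
    obtain K' where K': "\<forall>T\<in>?G. norm (T *v y) \<le> K'" using bnd by blast
    have "norm ((T *v x) \<bullet> (T *v y)) \<le> K * K'" if "T \<in> ?G" for T
    proof -
      have "norm ((T *v x) \<bullet> (T *v y)) \<le> norm (T *v x) * norm (T *v y)"
        using Cauchy_Schwarz_ineq2 by simp
      also have "\<dots> \<le> K * K'" using K K' that by (intro mult_mono) (auto intro: order_trans[OF norm_ge_zero])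
      finally show ?thesis .
    qed
    then have "AE T in \<mu>. norm ((T *v x) \<bullet> (T *v y)) \<le> K * K'"
      by (intro AEGI) auto
    then show ?thesis by (rule integrable_const_bound) (rule in_meas)
  qed
  define P where "P x = integral\<^sup>L \<mu> (\<lambda>T. T *v x)" for x
  have linP: "linear P"
  proof (rule linearI)
    fix x y show "P (x + y) = P x + P y"
      unfolding P_def by (simp add: matrix_vector_right_distrib Bochner_Integration.integral_add[OF int_mv int_mv])
  next
    fix c :: real and x show "P (c *\<^sub>R x) = c *\<^sub>R P x"
      unfolding P_def by (simp add: matrix_vector_mult_scaleR)
  qed
  have KM: "\<Omega> = convex hull {x. x extreme_point_of \<Omega>}"
    by (rule Krein_Milman_Minkowski[OF cpt cvx])
  have "\<Omega> \<noteq> {}"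
  proof
    assume "\<Omega> = {}"
    then have "(UNIV :: (real^'n) set) = {0}" using spO by simp
    moreover have "axis undefined (1::real) \<noteq> (0::real^'n)" by simp
    ultimately show False by (metis UNIV_I singletonD)
  qed
  then obtain e0 where e0: "e0 extreme_point_of \<Omega>" using KM by fastforce
  have e0O: "e0 \<in> \<Omega>" using e0 by (simp add: extreme_point_of_def)
  define m where "m = P e0"
  have Pe: "P e = m" if ee: "e extreme_point_of \<Omega>" for e
  proof -
    obtain S where S: "S \<in> ?G" "S *v e0 = e" using trans[OF e0 ee] by blast
    have "P e = integral\<^sup>L \<mu> (\<lambda>T. (T ** S) *v e0)"
      unfolding P_def by (simp add: S(2)[symmetric] matrix_vector_mul_assoc)
    also have "\<dots> = integral\<^sup>L (distr \<mu> borel (\<lambda>A. A ** S)) (\<lambda>A. A *v e0)"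
      by (rule integral_distr[symmetric]) (rule measM[OF bm_lin[OF lin_mm]], rule mvb)
    also have "\<dots> = m" using rinv[OF S(1)] by (simp add: m_def P_def)
    finally show ?thesis .
  qed
  have affP: "affine {x. P x = m}"
    unfolding affine_def
    by (auto simp: linear_add[OF linP] linear_scale[OF linP] scaleR_left_distrib[symmetric])
  have PO: "P x = m" if "x \<in> \<Omega>" for x
  proof -
    have "convex hull {x. x extreme_point_of \<Omega>} \<subseteq> {x. P x = m}"
      by (rule hull_minimal) (use Pe affine_imp_convex[OF affP] in auto)
    then show ?thesis using that KM by blast
  qed
  have PaffO: "P x = m" if "x \<in> affine hull \<Omega>" for x
  proof -
    have "affine hull \<Omega> \<subseteq> {x. P x = m}"
      by (rule hull_minimal) (use PO affP in auto)
    then show ?thesis using that by blast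
  qed
  have mO: "m \<in> \<Omega>"
  proof (rule ccontr)
    assume "m \<notin> \<Omega>"
    then obtain a b where ab: "a \<bullet> m < b" "\<forall>x\<in>\<Omega>. a \<bullet> x > b"
      using separating_hyperplane_closed_point[OF cvx compact_imp_closed[OF cpt]] by blast
    have "a \<bullet> m = integral\<^sup>L \<mu> (\<lambda>T. a \<bullet> (T *v e0))"
      unfolding m_def P_def by (simp add: int_mv)
    have "AE T in \<mu>. b \<le> a \<bullet> (T *v e0)"
      by (intro AEGI) (use ab GO e0O in \<open>auto intro: less_imp_le\<close>)
    then have "integral\<^sup>L \<mu> (\<lambda>T. b) \<le> integral\<^sup>L \<mu> (\<lambda>T. a \<bullet> (T *v e0))"
      by (intro integral_mono_AE) (auto simp: int_mv)
    then have "b \<le> a \<bullet> m" unfolding m_def P_def by (simp add: int_mv prob_space)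
    then show False using ab by simp
  qed
  have mfix: "S *v m = m" if S: "S \<in> ?G" for S
  proof -
    have "S *v m = integral\<^sup>L \<mu> (\<lambda>T. S *v (T *v e0))"
      unfolding m_def P_def by (rule integral_bounded_linear[symmetric]) (auto simp: int_mv)
    also have "\<dots> = integral\<^sup>L \<mu> (\<lambda>T. (S ** T) *v e0)" by (simp add: matrix_vector_mul_assoc)
    also have "\<dots> = integral\<^sup>L (distr \<mu> borel (\<lambda>A. S ** A)) (\<lambda>A. A *v e0)"
      by (rule integral_distr[symmetric]) (rule measM[OF bm_lin[OF lin_mm2]], rule mvb)
    also have "\<dots> = m" using linv[OF S] by (simp add: m_def P_def)
    finally show ?thesis .
  qed
  have Pfix: "P w = w" if "\<forall>S\<in>?G. S *v w = w" for w
  proof -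
    have "P w = integral\<^sup>L \<mu> (\<lambda>T. w)"
      unfolding P_def
      by (rule integral_cong_AE) (auto intro!: mv_meas AEGI simp: that)
    then show ?thesis by (simp add: prob_space)
  qed
  have om: "omegaM \<Omega> = m"
    unfolding omegaM_def
  proof (rule the_equality)
    show "m \<in> \<Omega> \<and> (\<forall>T\<in>?G. T *v m = m)" using mO mfix by blast
  next
    fix w assume "w \<in> \<Omega> \<and> (\<forall>T\<in>?G. T *v w = w)"
    then show "w = m" using Pfix PO by metis
  qed
  have mm1: "m \<bullet> m = 1" using assms(3) om by simp
  let ?B = "GL_inner \<mu>"
  have Bsym: "?B x y = ?B y x" for x y
    unfolding GL_inner_def by (simp add: inner_commute)
  have Blin: "linear (?B x)" for x
  proof (rule linearI)
    fix y z show "?B x (y + z) = ?B x y + ?B x z"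
      unfolding GL_inner_def
      by (simp add: matrix_vector_right_distrib inner_add_right Bochner_Integration.integral_add[OF int_in int_in])
  next
    fix c :: real and y show "?B x (c *\<^sub>R y) = c *\<^sub>R ?B x y"
      unfolding GL_inner_def by (simp add: matrix_vector_mult_scaleR)
  qed
  have Bpos: "?B x x > 0" if x: "x \<noteq> 0" for x
  proof -
    have nn: "AE T in \<mu>. 0 \<le> (T *v x) \<bullet> (T *v x)" by simp
    have ge: "?B x x \<ge> 0" unfolding GL_inner_def by (rule integral_nonneg_AE[OF nn])
    have "?B x x \<noteq> 0"
    proof
      assume "?B x x = 0"
      then have h0: "AE T in \<mu>. (T *v x) \<bullet> (T *v x) = 0"
        unfolding GL_inner_def using integral_nonneg_eq_0_iff_AE[OF int_in nn] by simp
      have nz: False if "T \<in> ?G" "(T *v x) \<bullet> (T *v x) = 0" for T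
      proof -
        have "invertible T" using that(1) by (simp add: GL_of_def)
        then have "inj ((*v) T)" by (rule inj_matrix_vector_mult)
        moreover have "T *v x = T *v 0" using that(2) by simp
        ultimately show False using x by (meson injD)
      qed
      have "AE T in \<mu>. False" using AEG h0 by eventually_elim (use nz in blast)
      then show False by (simp add: AE_False)
    qed
    then show ?thesis using ge by simp
  qed
  have Bm: "?B m x = m \<bullet> P x" for x
  proof -
    have "?B m x = integral\<^sup>L \<mu> (\<lambda>T. m \<bullet> (T *v x))"
      unfolding GL_inner_def
      by (rule integral_cong_AE) (auto intro!: in_meas borel_measurable_inner mv_meas AEGI simp: mfix)
    then show ?thesis unfolding P_def by (simp add: int_mv)
  qed
  have Bmm: "?B m m = 1" using Bm Pfix mfix mm1 by simp
  have aff: "x \<in> affine hull \<Omega> \<longleftrightarrow> ?B m x = 1" for x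
  proof
    assume "x \<in> affine hull \<Omega>"
    then show "?B m x = 1" using PaffO Bm mm1 by simp
  next
    assume h: "?B m x = 1"
    have "x \<in> span \<Omega>" using spO by simp
    then obtain S u where S: "finite S" "S \<subseteq> \<Omega>" "x = (\<Sum>v\<in>S. u v *\<^sub>R v)"
      unfolding span_explicit by auto
    have "P x = (\<Sum>v\<in>S. u v *\<^sub>R P v)"
      using S(3) by (simp add: linear_sum[OF linP] linear_scale[OF linP])
    also have "\<dots> = (\<Sum>v\<in>S. u v *\<^sub>R m)" by (rule sum.cong) (use S(2) PO in auto)
    also have "\<dots> = sum u S *\<^sub>R m" by (simp add: scaleR_sum_left)
    finally have "sum u S = 1" using h Bm mm1 by simp
    then have "S \<noteq> {}" by auto
    then show "x \<in> affine hull \<Omega>"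
      unfolding affine_hull_explicit using S \<open>sum u S = 1\<close> by blast
  qed
  obtain v :: "nat \<Rightarrow> real^'n" where v:
    "inj_on v {1..CARD('n)}"
    "independent (v ` {1..CARD('n)})" "span (v ` {1..CARD('n)}) = UNIV"
    "\<forall>i\<in>{1..CARD('n)}. \<forall>j\<in>{1..CARD('n)}. ?B (v i) (v j) = (if i = j then 1 else 0)"
    "v (CARD('n)) = m"
    "\<forall>x. ?B m x = 1 \<longleftrightarrow> (\<exists>a :: nat \<Rightarrow> real. x = (\<Sum>l = 1..CARD('n) - 1. a l *\<^sub>R v l) + m)"
    using orthonormal_basis_B[OF Bsym Blin Bpos Bmm] by blast
  show ?thesis
    by (rule exI[of _ v]) (use v aff om in auto)
qed

end
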